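(* For an odd integer $n$ and any integer $1\leq k\leq\frac12(n-3)$, with $q=uv$, $$\sum_{1\leq i\leq\frac12(n-1)}e_{2i}\,g_{n-2i,n}\prod_{j=k-i+1}^{\frac12(n-1)-i}\frac{q^{2j}-1}{q^{2j-2k+2i}-1}=\frac{q^{nk}-1}{q-1}\prod_{j=k+1}^{\frac12(n-1)}\frac{q^{2j}-1}{q^{2j-2k}-1}.$$
   Context: $e_{2i}=e_{2i}(u,v)$ is the Hodge–Deligne polynomial of the variety of nondegenerate skew forms on $\mathbb{C}^{2i}$ up to scaling; $g_{m,n}=g_{m,n}(u,v)$ is the Hodge–Deligne polynomial of the Grassmannian $G(m,n)$. Empty products equal $1$. *)

theory Defs
  imports Complex_Main "HOL-Computational_Algebra.Polynomial" "HOL-Computational_Algebra.Fraction_Field"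
begin

text \<open>The formal variables u, v of Hodge--Deligne polynomials, living in the field of
  fractions of the bivariate polynomial ring Z[u,v] (encoded as int poly poly:
  inner variable u, outer variable v).\<close>
definition hd_u :: "int poly poly fract" where
  "hd_u = Fract [:[:0, 1:]:] 1"

definition hd_v :: "int poly poly fract" where
  "hd_v = Fract [:0, 1:] 1"

definition hd_grass :: "'a::field \<Rightarrow> 'a \<Rightarrow> nat \<Rightarrow> nat \<Rightarrow> 'a" where
  "hd_grass u v m n = (let q = u * v in
      (\<Prod>j\<in>{1..m}. (q ^ (n - m + j) - 1) / (q ^ j - 1)))"

text \<open>Hodge--Deligne polynomial of the variety of nondegenerate skew forms on C^(2i)
  up to scaling, i.e. (GL_(2i)/Sp_(2i))/C^*:
  e_(2i) = q^(i(i-1)) * prod_(j=2..i) (q^(2j-1) - 1), q = uv.\<close>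
definition hd_skew :: "'a::field \<Rightarrow> 'a \<Rightarrow> nat \<Rightarrow> 'a" where
  "hd_skew u v i = (let q = u * v in
      q ^ (i * (i - 1)) * (\<Prod>j\<in>{2..i}. (q ^ (2 * j - 1) - 1)))"

end

theory Submission imports Defs begin

definition qfac :: "'a::field \<Rightarrow> nat \<Rightarrow> 'a" where "qfac q a = (\<Prod>j\<in>{1..a}. q^j - 1)"
definition qodd :: "'a::field \<Rightarrow> nat \<Rightarrow> 'a" where "qodd q a = (\<Prod>j\<in>{1..a}. q^(2*j-1) - 1)"

fun gb :: "'a::comm_ring_1 \<Rightarrow> nat \<Rightarrow> nat \<Rightarrow> 'a" where
  "gb Q 0 i = (if i = 0 then 1 else 0)"
| "gb Q (Suc k) 0 = 1"
| "gb Q (Suc k) (Suc i) = gb Q k i + Q^(Suc i) * gb Q k (Suc i)"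

lemma gb_zero: "k < i \<Longrightarrow> gb Q k i = 0"
  by (induction Q k i rule: gb.induct) auto

lemma gb_0: "gb Q k 0 = 1" by (cases k) auto

lemma newton: "(x::'a::comm_ring_1)^k = (\<Sum>i\<le>k. gb Q k i * (\<Prod>t<i. x - Q^t))"
proof (induction k)
  case 0 then show ?case by simp
next
  case (Suc k)
  define P where "P = (\<lambda>i. (\<Prod>t<i. x - Q^t))"
  have xP: "x * P i = P (Suc i) + Q^i * P i" for i
    by (simp add: P_def algebra_simps)
  have P0: "P 0 = 1" by (simp add: P_def)
  have IH: "x^k = (\<Sum>i\<le>k. gb Q k i * P i)" using Suc by (simp add: P_def)
  have "x^Suc k = (\<Sum>i\<le>k. gb Q k i * (x * P i))"
    unfolding IH power_Suc sum_distrib_left by (intro sum.cong refl) (simp add: mult_ac)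
  also have "\<dots> = (\<Sum>i\<le>k. gb Q k i * P (Suc i)) + (\<Sum>i\<le>k. gb Q k i * Q^i * P i)"
    by (simp add: xP distrib_left sum.distrib mult.assoc)
  also have "(\<Sum>i\<le>k. gb Q k i * Q^i * P i) = (\<Sum>i\<le>Suc k. gb Q k i * Q^i * P i)"
    by (simp add: gb_zero)
  also have "\<dots> = 1 + (\<Sum>i\<le>k. Q^(Suc i) * gb Q k (Suc i) * P (Suc i))"
    by (subst sum.atMost_Suc_shift) (simp add: gb_0 P_def mult.commute mult.left_commute)
  also have "(\<Sum>i\<le>k. gb Q k i * P (Suc i)) + (1 + (\<Sum>i\<le>k. Q^(Suc i) * gb Q k (Suc i) * P (Suc i)))
     = gb Q (Suc k) 0 * P 0 + (\<Sum>i\<le>k. gb Q (Suc k) (Suc i) * P (Suc i))"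
    by (simp add: P0 sum.distrib distrib_right add.commute add.left_commute mult.assoc)
  also have "\<dots> = (\<Sum>i\<le>Suc k. gb Q (Suc k) i * P i)"
    by (subst sum.atMost_Suc_shift) simp
  finally show ?case by (simp add: P_def)
qed

lemma qfac_Suc: "qfac q (Suc a) = qfac q a * (q^Suc a - 1)"
  by (simp add: qfac_def)
lemma qodd_Suc: "qodd q (Suc a) = qodd q a * (q^(2*a+1) - 1)"
  by (simp add: qodd_def)

lemma gb_fac: "i \<le> k \<Longrightarrow> gb Q k i * qfac Q i * qfac Q (k - i) = qfac Q k"
proof (induction k arbitrary: i)
  case 0 then show ?case by (simp add: qfac_def)
next
  case (Suc k)
  show ?case
  proof (cases i)
    case 0 then show ?thesis by (simp add: qfac_def)
  next
    case (Suc j)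
    have A: "gb Q k j * qfac Q j * qfac Q (k - j) = qfac Q k" using Suc.IH Suc Suc.prems by simp
    have B: "Q^Suc j * gb Q k (Suc j) * qfac Q (Suc j) * qfac Q (k - j) = qfac Q k * (Q^Suc k - Q^Suc j)"
    proof (cases "j < k")
      case True
      then have "k - j = Suc (k - Suc j)" by simp
      then have "qfac Q (k - j) = qfac Q (k - Suc j) * (Q^(k-j) - 1)" by (simp add: qfac_Suc)
      moreover have "gb Q k (Suc j) * qfac Q (Suc j) * qfac Q (k - Suc j) = qfac Q k"
        using Suc.IH True by simp
      moreover have "Q^Suc j * (Q^(k-j) - 1) = Q^Suc k - Q^Suc j"
        using True by (simp add: algebra_simps flip: power_add)
      ultimately show ?thesis by (metis (no_types, lifting) mult.assoc mult.commute)
    next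
      case False
      then have "j = k" using Suc Suc.prems by simp
      then show ?thesis by (simp add: gb_zero)
    qed
    have "gb Q (Suc k) i * qfac Q i * qfac Q (Suc k - i)
       = gb Q k j * qfac Q j * qfac Q (k - j) * (Q^Suc j - 1) + Q^Suc j * gb Q k (Suc j) * qfac Q (Suc j) * qfac Q (k - j)"
      using Suc by (simp add: qfac_Suc algebra_simps)
    also have "\<dots> = qfac Q k * (Q^Suc k - 1)" using A B by (simp add: algebra_simps)
    finally show ?thesis by (simp add: qfac_Suc)
  qed
qed


lemma fac_shift: "qfac q (a+b) = qfac q b * (\<Prod>j\<in>{1..a}. q^(b+j) - 1)"
  by (induction a) (simp_all add: qfac_Suc prod.nat_ivl_Suc' algebra_simps)

lemma fac_even: "qfac q (2*a) = qfac (q^2) a * qodd q a"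
proof (induction a)
  case 0 then show ?case by (simp add: qfac_def qodd_def)
next
  case (Suc a)
  have h0: "qfac q (2 * Suc a) = qfac q (2*a) * (q^(2*a+1) - 1) * (q^(2*a+2) - 1)"
    by (simp add: qfac_Suc)
  have p: "(q^2)^(Suc a) = q^(2*a+2)" by (subst power_mult[symmetric]) simp
  have h1: "qfac (q^2) (Suc a) = qfac (q^2) a * (q^(2*a+2) - 1)"
    by (simp only: qfac_Suc p)
  show ?case using Suc h0 h1 by (simp add: qodd_Suc mult_ac)
qed

lemma fac_odd: "qfac q (2*a+1) = qfac (q^2) a * qodd q (Suc a)"
proof -
  have e: "qfac q (2*a+1) = qfac q (2*a) * (q^(2*a+1) - 1)" using qfac_Suc[of q "2*a"] by simp
  show ?thesis by (simp only: e fac_even qodd_Suc mult.assoc)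
qed

context
  fixes q :: "'a::field"
  assumes H: "\<And>j. 1 \<le> j \<Longrightarrow> q^j \<noteq> 1"
begin

lemma qfac_nz: "qfac q a \<noteq> 0"
  unfolding qfac_def using H by (auto simp: prod_zero_iff)

lemma qfac2_nz: "qfac (q^2) a \<noteq> 0"
  unfolding qfac_def using H[of "2*_"] by (auto simp: prod_zero_iff power_mult)

lemma qodd_nz: "qodd q a \<noteq> 0"
  unfolding qodd_def using H[of "2*_-1"] by (auto simp: prod_zero_iff)

lemma P_lemma:
  assumes "i \<le> k" "k \<le> m"
  shows "(\<Prod>j\<in>{k-i+1..m-i}. (q^(2*j)-1)/(q^(2*j+2*i-2*k)-1))
     = qfac (q^2) (m-i) / (qfac (q^2) (k-i) * qfac (q^2) (m-k))"
proof -
  define b where "b = k - i"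
  define a where "a = m - k"
  define f where "f = (\<lambda>j. (q^(2*j)-1)/(q^(2*j+2*i-2*k)-1))"
  have "{k-i+1..m-i} = {1+b..a+b}" using assms by (auto simp: a_def b_def)
  then have "(\<Prod>j\<in>{k-i+1..m-i}. f j) = (\<Prod>j\<in>{1..a}. f (j+b))"
    by (simp only: prod.shift_bounds_cl_nat_ivl)
  then have "(\<Prod>j\<in>{k-i+1..m-i}. (q^(2*j)-1)/(q^(2*j+2*i-2*k)-1))
      = (\<Prod>j\<in>{1..a}. (q^(2*(j+b))-1)/(q^(2*(j+b)+2*i-2*k)-1))"
    by (simp only: f_def)
  also have "\<dots> = (\<Prod>j\<in>{1..a}. ((q^2)^(b+j)-1)/((q^2)^j-1))"
  proof (intro prod.cong refl)
    fix j assume "j \<in> {1..a}"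
    have eq: "2*(j+b)+2*i-2*k = 2*j" using assms unfolding b_def by presburger
    show "(q^(2*(j+b))-1)/(q^(2*(j+b)+2*i-2*k)-1) = ((q^2)^(b+j)-1)/((q^2)^j-1)"
      by (subst eq) (simp add: power_mult[symmetric] add.commute)
  qed
  also have "\<dots> = (\<Prod>j\<in>{1..a}. ((q^2)^(b+j)-1)) / qfac (q^2) a"
    by (simp add: prod_dividef qfac_def)
  also have "(\<Prod>j\<in>{1..a}. ((q^2)^(b+j)-1)) = qfac (q^2) (a+b) / qfac (q^2) b"
    using fac_shift[of "q^2" a b] qfac2_nz by simp
  also have "a + b = m - i" using assms by (simp add: a_def b_def)
  finally show ?thesis by (simp add: a_def b_def)
qed

lemma T_lemma:
  "i \<le> m+1 \<Longrightarrow> (\<Prod>t<i. q^(2*m+1) - (q^2)^t) * qodd q (m+1-i) = q^(i*(i-1)) * qodd q (m+1)"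
proof (induction i)
  case 0 then show ?case by simp
next
  case (Suc i)
  then have e: "m + 1 - i = Suc (m - i)" by simp
  have e': "m + 1 - Suc i = m - i" by simp
  have "2*m+1 = 2*i + (2*(m-i)+1)" using Suc.prems by simp
  then have "q^(2*m+1) = q^(2*i) * q^(2*(m-i)+1)" by (metis power_add)
  moreover have "(q^2)^i = q^(2*i)" by (simp add: power_mult)
  ultimately have f: "q^(2*m+1) - (q^2)^i = q^(2*i) * (q^(2*(m-i)+1) - 1)"
    by (simp add: right_diff_distrib)
  have "(\<Prod>t<Suc i. q^(2*m+1) - (q^2)^t) * qodd q (m+1-Suc i)
      = (\<Prod>t<i. q^(2*m+1) - (q^2)^t) * (q^(2*i) * (q^(2*(m-i)+1) - 1)) * qodd q (m-i)"
    using e' by (simp only: prod.lessThan_Suc f)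
  also have "\<dots> = (\<Prod>t<i. q^(2*m+1) - (q^2)^t) * qodd q (Suc (m-i)) * q^(2*i)"
    by (simp only: qodd_Suc mult_ac)
  also have "\<dots> = (\<Prod>t<i. q^(2*m+1) - (q^2)^t) * qodd q (m+1-i) * q^(2*i)"
    using e by simp
  also have "\<dots> = q^(i*(i-1) + 2*i) * qodd q (m+1)"
    using Suc by (simp add: power_add)
  also have "i*(i-1) + 2*i = Suc i * (Suc i - 1)" by (cases i) (simp_all add: algebra_simps)
  finally show ?case .
qed

end

lemma skew_lemma: "1 \<le> i \<Longrightarrow> (u*v - 1) * hd_skew u v i = (u*v)^(i*(i-1)) * qodd (u*v) i"
proof -
  assume "1 \<le> i"
  have "(\<Prod>j\<in>{1..i}. (u*v)^(2*j-1) - 1) = ((u*v)^(2*1-1) - 1) * (\<Prod>j\<in>{Suc 1..i}. (u*v)^(2*j-1) - 1)"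
    using prod.atLeast_Suc_atMost[OF \<open>1 \<le> i\<close>, of "\<lambda>j. (u*v)^(2*j-1) - 1"] by simp
  then show ?thesis by (simp add: hd_skew_def qodd_def Let_def numeral_2_eq_2 mult_ac)
qed

lemma grass_lemma:
  assumes "2*i \<le> n" "\<And>j. 1 \<le> j \<Longrightarrow> (u*v)^j \<noteq> 1"
  shows "hd_grass u v (n-2*i) n = qfac (u*v) n / (qfac (u*v) (2*i) * qfac (u*v) (n-2*i))"
proof -
  have "hd_grass u v (n-2*i) n = (\<Prod>j\<in>{1..n-2*i}. (u*v)^(2*i+j) - 1) / qfac (u*v) (n-2*i)"
    using assms by (simp add: hd_grass_def Let_def prod_dividef qfac_def)
  also have "(\<Prod>j\<in>{1..n-2*i}. (u*v)^(2*i+j) - 1) = qfac (u*v) n / qfac (u*v) (2*i)"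
    using fac_shift[of "u*v" "n-2*i" "2*i"] qfac_nz[OF assms(2)] assms(1) by simp
  finally show ?thesis by simp
qed


lemma alg:
  fixes S1 z T g Gi Gki Gmk Gm Gk Gmi Oi Om1 Omi1 :: "'a::field"
  assumes nz: "Gi \<noteq> 0" "Gki \<noteq> 0" "Gmk \<noteq> 0" "Gm \<noteq> 0" "Gk \<noteq> 0" "Gmi \<noteq> 0"
     "Oi \<noteq> 0" "Om1 \<noteq> 0" "Omi1 \<noteq> 0"
  and s: "S1 = z * Oi" and t: "T * Omi1 = z * Om1" and gbf: "g * Gi * Gki = Gk"
  shows "S1 * ((Gm*Om1)/((Gi*Oi)*(Gmi*Omi1))) * (Gmi/(Gki*Gmk)) = Gm/(Gk*Gmk) * (g * T)"
proof -
  have T: "T = z * Om1 / Omi1" using t nz by (simp add: field_simps)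
  have g: "g = Gk / (Gi * Gki)" using gbf nz by (simp add: field_simps)
  show ?thesis unfolding s T g using nz by (simp add: field_simps)
qed

lemma main_generic:
  fixes u v :: "'a::field"
  assumes H: "\<And>j. 1 \<le> j \<Longrightarrow> (u*v)^j \<noteq> 1"
    and n: "n = 2*m+1" and k1: "1 \<le> k" and km: "k + 1 \<le> m"
  shows "(let q = u * v in
     (\<Sum>i\<in>{1..m}.
        hd_skew u v i * hd_grass u v (n - 2 * i) n *
        (\<Prod>j\<in>{int k - int i + 1 .. int m - int i}.
            (q powi (2 * j) - 1) / (q powi (2 * j - 2 * int k + 2 * int i) - 1)))
     = (q ^ (n * k) - 1) / (q - 1) *
        (\<Prod>j\<in>{k + 1 .. m}. (q ^ (2 * j) - 1) / (q ^ (2 * j - 2 * k) - 1)))"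
proof -
  define q where "q = u * v"
  define Q where "Q = q^2"
  have Hq: "\<And>j. 1 \<le> j \<Longrightarrow> q^j \<noteq> 1" using H by (simp add: q_def)
  define Pint where "Pint = (\<lambda>i::nat. (\<Prod>j\<in>{int k - int i + 1 .. int m - int i}.
            (q powi (2 * j) - 1) / (q powi (2 * j - 2 * int k + 2 * int i) - 1)))"
  define R where "R = qfac Q m / (qfac Q k * qfac Q (m-k))"
  define T where "T = (\<lambda>i. (\<Prod>t<i. q^n - Q^t))"
  define tm where "tm = (\<lambda>i. hd_skew u v i * hd_grass u v (n - 2 * i) n * Pint i)"
  have nzQ: "qfac Q a \<noteq> 0" for a unfolding Q_def by (rule qfac2_nz, erule Hq)
  have nzO: "qodd q a \<noteq> 0" for a by (rule qodd_nz, erule Hq)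
  have q1: "q - 1 \<noteq> 0" using Hq[of 1] by simp
  have step1: "(\<Sum>i\<in>{1..m}. tm i) = (\<Sum>i\<in>{1..k}. tm i)"
  proof (rule sum.mono_neutral_right)
    show "\<forall>i\<in>{1..m} - {1..k}. tm i = 0"
    proof
      fix i assume i: "i \<in> {1..m} - {1..k}"
      have "0 \<in> {int k - int i + 1 .. int m - int i}" using i by auto
      moreover have "finite {int k - int i + 1 .. int m - int i}" by simp
      ultimately have "Pint i = 0" unfolding Pint_def
        by (subst prod_zero_iff) (auto intro!: bexI[of _ 0])
      then show "tm i = 0" by (simp add: tm_def)
    qed
  qed (use km in auto)
  have step3: "(q - 1) * tm i = R * (gb Q k i * T i)" if i: "1 \<le> i" "i \<le> k" for i
  proof -
    have PI: "Pint i = (\<Prod>j\<in>{k-i+1..m-i}. (q^(2*j)-1)/(q^(2*j+2*i-2*k)-1))"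
    proof -
      have "{int k - int i + 1 .. int m - int i} = int ` {k-i+1..m-i}"
        using i km by (simp add: image_int_atLeastAtMost of_nat_diff)
      then have "Pint i = (\<Prod>j\<in>{k-i+1..m-i}. (q powi (2 * int j) - 1) / (q powi (2 * int j - 2 * int k + 2 * int i) - 1))"
        unfolding Pint_def by (simp add: prod.reindex)
      also have "\<dots> = (\<Prod>j\<in>{k-i+1..m-i}. (q^(2*j)-1)/(q^(2*j+2*i-2*k)-1))"
      proof (intro prod.cong refl)
        fix j assume j: "j \<in> {k-i+1..m-i}"
        have a: "2 * int j = int (2*j)" by simp
        have b: "2 * int j - 2 * int k + 2 * int i = int (2*j+2*i-2*k)" using j i by auto
        show "(q powi (2 * int j) - 1) / (q powi (2 * int j - 2 * int k + 2 * int i) - 1) = (q^(2*j)-1)/(q^(2*j+2*i-2*k)-1)"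
          by (subst b, subst a) (simp only: power_int_of_nat)
      qed
      finally show ?thesis .
    qed
    have Pv: "Pint i = qfac Q (m-i) / (qfac Q (k-i) * qfac Q (m-k))"
      using PI P_lemma[OF Hq, of i k m] i km by (simp add: Q_def)
    have Sv: "(q - 1) * hd_skew u v i = q^(i*(i-1)) * qodd q i"
      using skew_lemma[of i u v] i by (simp add: q_def)
    have Gv: "hd_grass u v (n - 2*i) n = qfac q n / (qfac q (2*i) * qfac q (n - 2*i))"
      using grass_lemma[of i n u v] H i km n by (simp add: q_def)
    have e1: "qfac q n = qfac Q m * qodd q (m+1)" using fac_odd[of q m] n by (simp add: Q_def)
    have e2: "qfac q (2*i) = qfac Q i * qodd q i" using fac_even[of q i] by (simp add: Q_def)
    have "n - 2*i = 2*(m-i)+1" using n i km by simp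
    then have e3: "qfac q (n - 2*i) = qfac Q (m-i) * qodd q (m+1-i)"
      using fac_odd[of q "m-i"] i km by (simp add: Q_def Suc_diff_le)
    have Tv: "T i * qodd q (m+1-i) = q^(i*(i-1)) * qodd q (m+1)"
      using T_lemma[OF Hq, of i m] i km n by (simp add: T_def Q_def)
    have gbv: "gb Q k i * qfac Q i * qfac Q (k-i) = qfac Q k" using gb_fac i by blast
    have "(q - 1) * tm i = ((q - 1) * hd_skew u v i) * hd_grass u v (n - 2*i) n * Pint i"
      by (simp add: tm_def mult_ac)
    also have "\<dots> = R * (gb Q k i * T i)"
      unfolding Sv Gv e1 e2 e3 Pv R_def
      apply (rule alg)
      apply (simp_all add: nzQ nzO gbv)
      using Tv by simp
    finally show ?thesis .
  qed
  have step4: "(\<Sum>i\<in>{1..k}. R * (gb Q k i * T i)) = R * ((q^n)^k - 1)"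
  proof -
    have "(q^n)^k = (\<Sum>i\<le>k. gb Q k i * T i)" using newton[of "q^n" k Q] by (simp add: T_def)
    also have "{..k} = insert 0 {1..k}" by auto
    finally have "(q^n)^k = 1 + (\<Sum>i\<in>{1..k}. gb Q k i * T i)" by (simp add: gb_0 T_def)
    then show ?thesis by (simp add: sum_distrib_left)
  qed
  have step5: "(\<Prod>j\<in>{k + 1 .. m}. (q ^ (2 * j) - 1) / (q ^ (2 * j - 2 * k) - 1)) = R"
    using P_lemma[OF Hq, of 0 k m] km by (simp add: R_def Q_def)
  have "(q - 1) * (\<Sum>i\<in>{1..m}. tm i) = R * ((q^n)^k - 1)"
    using step1 step3 step4 by (simp add: sum_distrib_left)
  also have "(q^n)^k = q^(n*k)" by (simp add: power_mult)
  finally have "(\<Sum>i\<in>{1..m}. tm i) = (q ^ (n * k) - 1) / (q - 1) * R"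
    using q1 by (simp add: field_simps)
  then show ?thesis using step5 by (simp add: tm_def Pint_def q_def Let_def)
qed


lemma Fract_pow: "(Fract (p::'b::idom) 1) ^ j = Fract (p^j) 1"
  by (induction j) (simp_all add: One_fract_def)

lemma hd_nonroot: "1 \<le> j \<Longrightarrow> (hd_u * hd_v)^j \<noteq> 1"
proof
  assume j: "1 \<le> j" and eq: "(hd_u * hd_v)^j = 1"
  define p :: "int poly poly" where "p = [:[:0, 1:]:] * [:0, 1:]"
  have "hd_u * hd_v = Fract p 1" by (simp add: hd_u_def hd_v_def p_def)
  then have "Fract (p^j) 1 = Fract 1 1" using eq by (simp add: Fract_pow One_fract_def)
  then have pj: "p^j = 1" by (simp add: eq_fract)
  have "p = pCons 0 [:[:0, 1:]:]" by (simp add: p_def)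
  then have dp: "degree p = 1" "p \<noteq> 0" by auto
  have "degree (p^j) = j" using degree_power_eq[OF dp(2), of j] dp by simp
  then show False using pj j by simp
qed

theorem proposition7p11:
  fixes n k :: nat
  assumes "odd n" and "1 \<le> k" and "2 * k + 3 \<le> n"
  shows "(let u = hd_u; v = hd_v; q = u * v in
     (\<Sum>i\<in>{1..(n - 1) div 2}.
        hd_skew u v i * hd_grass u v (n - 2 * i) n *
        (\<Prod>j\<in>{int k - int i + 1 .. int ((n - 1) div 2) - int i}.
            (q powi (2 * j) - 1) / (q powi (2 * j - 2 * int k + 2 * int i) - 1)))
     = (q ^ (n * k) - 1) / (q - 1) *
        (\<Prod>j\<in>{k + 1 .. (n - 1) div 2}. (q ^ (2 * j) - 1) / (q ^ (2 * j - 2 * k) - 1)))"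
proof -
  define m where "m = (n - 1) div 2"
  have n: "n = 2*m+1" using assms(1) unfolding m_def by presburger
  have km: "k + 1 \<le> m" using assms(3) unfolding m_def by linarith
  show ?thesis
    using main_generic[OF hd_nonroot n assms(2) km] unfolding m_def[symmetric] by (simp add: Let_def)
qed

end
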